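(* $\mathrm{Md}\cup\mathrm{Signs}$ is a finite complete axiomatisation of $\mathrm{Mod}_{\Sigma_{ms}}(\mathrm{Md}\cup\mathrm{Signs}\cup\mathrm{IL})$: for all $\Sigma_{ms}$-terms $r,s$, $\mathrm{Md}\cup\mathrm{Signs}\vdash r=s$ if and only if $r=s$ holds in every $\Sigma_{ms}$-structure satisfying $\mathrm{Md}$, $\mathrm{Signs}$ and $\mathrm{IL}$.
   Context: $\Sigma_{ms}=(0,1,+,\cdot,-,{}^{-1},\mathbf s)$ extends $\Sigma_m=(0,1,+,\cdot,-,{}^{-1})$ with a unary function $\mathbf s$. $\mathrm{Md}$ is the set of equations $(x+y)+z=x+(y+z)$, $x+y=y+x$, $x+0=x$, $x+(-x)=0$, $(x\cdot y)\cdot z=x\cdot(y\cdot z)$, $x\cdot y=y\cdot x$, $1\cdot x=x$, $x\cdot(y+z)=x\cdot y+x\cdot z$, $(x^{-1})^{-1}=x$, $x\cdot(x\cdot x^{-1})=x$. $1_t$ abbreviates $t\cdot t^{-1}$, $0_t$ abbreviates $1-1_t$, $t-u$ abbreviates $t+(-u)$. $\mathrm{Signs}$ is the set of equations: $\mathbf s(1_x)=1_x$; $\mathbf s(0_x)=0_x$; $\mathbf s(-1)=-1$; $\mathbf s(x^{-1})=\mathbf s(x)$; $\mathbf s(x\cdot y)=\mathbf s(x)\cdot\mathbf s(y)$; $0_{\mathbf s(x)-\mathbf s(y)}\cdot(\mathbf s(x+y)-\mathbf s(x))=0$. The inverse law $\mathrm{IL}$ is the conditional axiom $x\neq 0\rightarrow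 x\cdot x^{-1}=1$. $\vdash$ is derivability in equational logic. *)

theory Defs
  imports Main
begin

datatype tm =
    Var nat
  | Zero
  | One
  | Plus tm tm
  | Times tm tm
  | Neg tm
  | Inv tm
  | Sgn tm

definition one_of :: "tm \<Rightarrow> tm" where "one_of t = Times t (Inv t)"
definition zero_of :: "tm \<Rightarrow> tm" where "zero_of t = Plus One (Neg (one_of t))"
definition minus_tm :: "tm \<Rightarrow> tm \<Rightarrow> tm" where "minus_tm t u = Plus t (Neg u)"

abbreviation "x \<equiv> Var 0"
abbreviation "y \<equiv> Var 1"
abbreviation "z \<equiv> Var 2"

definition Md :: "(tm \<times> tm) set" where
  "Md = {
     (Plus (Plus x y) z, Plus x (Plus y z)),
     (Plus x y, Plus y x),
     (Plus x Zero, x),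
     (Plus x (Neg x), Zero),
     (Times (Times x y) z, Times x (Times y z)),
     (Times x y, Times y x),
     (Times One x, x),
     (Times x (Plus y z), Plus (Times x y) (Times x z)),
     (Inv (Inv x), x),
     (Times x (Times x (Inv x)), x) }"

definition Signs :: "(tm \<times> tm) set" where
  "Signs = {
     (Sgn (one_of x), one_of x),
     (Sgn (zero_of x), zero_of x),
     (Sgn (Neg One), Neg One),
     (Sgn (Inv x), Sgn x),
     (Sgn (Times x y), Times (Sgn x) (Sgn y)),
     (Times (zero_of (minus_tm (Sgn x) (Sgn y))) (minus_tm (Sgn (Plus x y)) (Sgn x)), Zero) }"

primrec subst :: "(nat \<Rightarrow> tm) \<Rightarrow> tm \<Rightarrow> tm" where
  "subst \<sigma> (Var n) = \<sigma> n"
| "subst \<sigma> Zero = Zero"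
| "subst \<sigma> One = One"
| "subst \<sigma> (Plus a b) = Plus (subst \<sigma> a) (subst \<sigma> b)"
| "subst \<sigma> (Times a b) = Times (subst \<sigma> a) (subst \<sigma> b)"
| "subst \<sigma> (Neg a) = Neg (subst \<sigma> a)"
| "subst \<sigma> (Inv a) = Inv (subst \<sigma> a)"
| "subst \<sigma> (Sgn a) = Sgn (subst \<sigma> a)"

inductive derivable :: "(tm \<times> tm) set \<Rightarrow> tm \<Rightarrow> tm \<Rightarrow> bool" for E where
  ax: "(l, r) \<in> E \<Longrightarrow> derivable E (subst \<sigma> l) (subst \<sigma> r)"
| refl: "derivable E t t"
| sym: "derivable E t u \<Longrightarrow> derivable E u t"
| trans: "derivable E t u \<Longrightarrow> derivable E u v \<Longrightarrow> derivable E t v"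
| cong_Plus: "derivable E a a' \<Longrightarrow> derivable E b b' \<Longrightarrow> derivable E (Plus a b) (Plus a' b')"
| cong_Times: "derivable E a a' \<Longrightarrow> derivable E b b' \<Longrightarrow> derivable E (Times a b) (Times a' b')"
| cong_Neg: "derivable E a a' \<Longrightarrow> derivable E (Neg a) (Neg a')"
| cong_Inv: "derivable E a a' \<Longrightarrow> derivable E (Inv a) (Inv a')"
| cong_Sgn: "derivable E a a' \<Longrightarrow> derivable E (Sgn a) (Sgn a')"

record 'a ms_struct =
  carrier :: "'a set"
  zero :: 'a
  one :: 'a
  add :: "'a \<Rightarrow> 'a \<Rightarrow> 'a"
  mul :: "'a \<Rightarrow> 'a \<Rightarrow> 'a"
  neg :: "'a \<Rightarrow> 'a"
  inv :: "'a \<Rightarrow> 'a"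
  sgn :: "'a \<Rightarrow> 'a"

definition is_struct :: "'a ms_struct \<Rightarrow> bool" where
  "is_struct M \<longleftrightarrow> carrier M \<noteq> {} \<and>
     zero M \<in> carrier M \<and> one M \<in> carrier M \<and>
     (\<forall>a\<in>carrier M. \<forall>b\<in>carrier M. add M a b \<in> carrier M \<and> mul M a b \<in> carrier M) \<and>
     (\<forall>a\<in>carrier M. neg M a \<in> carrier M \<and> inv M a \<in> carrier M \<and> sgn M a \<in> carrier M)"

primrec eval :: "'a ms_struct \<Rightarrow> (nat \<Rightarrow> 'a) \<Rightarrow> tm \<Rightarrow> 'a" where
  "eval M v (Var n) = v n"
| "eval M v Zero = zero M"
| "eval M v One = one M"
| "eval M v (Plus a b) = add M (eval M v a) (eval M v b)"
| "eval M v (Times a b) = mul M (eval M v a) (eval M v b)"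
| "eval M v (Neg a) = neg M (eval M v a)"
| "eval M v (Inv a) = inv M (eval M v a)"
| "eval M v (Sgn a) = sgn M (eval M v a)"

definition holds :: "'a ms_struct \<Rightarrow> tm \<Rightarrow> tm \<Rightarrow> bool" where
  "holds M t u \<longleftrightarrow> (\<forall>v. (\<forall>n. v n \<in> carrier M) \<longrightarrow> eval M v t = eval M v u)"

definition satisfies_eqs :: "'a ms_struct \<Rightarrow> (tm \<times> tm) set \<Rightarrow> bool" where
  "satisfies_eqs M E \<longleftrightarrow> (\<forall>(l, r)\<in>E. holds M l r)"

definition satisfies_IL :: "'a ms_struct \<Rightarrow> bool" where
  "satisfies_IL M \<longleftrightarrow> (\<forall>a\<in>carrier M. a \<noteq> zero M \<longrightarrow> mul M a (inv M a) = one M)"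

definition is_model :: "'a ms_struct \<Rightarrow> bool" where
  "is_model M \<longleftrightarrow> is_struct M \<and> satisfies_eqs M (Md \<union> Signs) \<and> satisfies_IL M"

end

theory Submission imports Defs "HOL-Library.Countable" Complex_Main begin

abbreviation "EE \<equiv> Md \<union> Signs"

lemma eval_closed: "is_struct M \<Longrightarrow> \<forall>n. v n \<in> carrier M \<Longrightarrow> eval M v t \<in> carrier M"
  by (induction t) (auto simp: is_struct_def)

lemma eval_subst: "eval M v (subst \<sigma> t) = eval M (\<lambda>k. eval M v (\<sigma> k)) t"
  by (induction t) auto

lemma sound: "derivable E r s \<Longrightarrow> is_struct M \<Longrightarrow> satisfies_eqs M E \<Longrightarrow> holds M r s"
proof (induction rule: derivable.induct)
  case (ax l r \<sigma>)
  show ?case unfolding holds_def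
  proof (intro allI impI)
    fix v :: "nat \<Rightarrow> _" assume v: "\<forall>n. v n \<in> carrier M"
    have "holds M l r" using ax unfolding satisfies_eqs_def by auto
    moreover have "\<forall>k. eval M v (\<sigma> k) \<in> carrier M" using eval_closed[OF ax(2) v] by auto
    ultimately show "eval M v (subst \<sigma> l) = eval M v (subst \<sigma> r)"
      unfolding eval_subst holds_def by (elim allE[of _ "\<lambda>k. eval M v (\<sigma> k)"]) simp
  qed
qed (auto simp: holds_def)

definition RM :: "real ms_struct" where
  "RM = \<lparr>carrier = UNIV, zero = 0, one = 1, add = (+), mul = (*), neg = uminus, inv = inverse, sgn = (\<lambda>r. sgn_class.sgn (r::real))\<rparr>"

lemma RM_struct: "is_struct RM" by (simp add: is_struct_def RM_def)

lemma rinv: "(a::real) * inverse a = (if a = 0 then 0 else 1)" by simp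

lemma RM_sat: "satisfies_eqs RM EE"
  unfolding satisfies_eqs_def Md_def Signs_def holds_def
  apply (simp add: RM_def one_of_def zero_of_def minus_tm_def algebra_simps)
  apply (intro conjI allI)
  apply (auto simp: rinv sgn_if zero_less_mult_iff mult_less_0_iff)
  done

lemma not01: "\<not> derivable EE Zero One"
proof
  assume "derivable EE Zero One"
  from sound[OF this RM_struct RM_sat] show False by (simp add: holds_def RM_def)
qed


instance tm :: countable by countable_datatype

lemma eqv_equivp: "equivp (derivable EE)"
  by (intro equivpI reflpI sympI transpI) (auto intro: derivable.intros)

quotient_type tq = tm / "derivable EE" by (rule eqv_equivp)

lemma axE: "(l, r) \<in> EE \<Longrightarrow> derivable EE (subst (\<lambda>n. if n = 0 then a else if n = Suc 0 then b else c) l) (subst (\<lambda>n. if n = 0 then a else if n = Suc 0 then b else c) r)"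
  by (rule derivable.ax)

instantiation tq :: comm_ring_1 begin
lift_definition zero_tq :: tq is Zero .
lift_definition one_tq :: tq is One .
lift_definition plus_tq :: "tq \<Rightarrow> tq \<Rightarrow> tq" is Plus by (rule derivable.cong_Plus)
lift_definition times_tq :: "tq \<Rightarrow> tq \<Rightarrow> tq" is Times by (rule derivable.cong_Times)
lift_definition uminus_tq :: "tq \<Rightarrow> tq" is Neg by (rule derivable.cong_Neg)
lift_definition minus_tq :: "tq \<Rightarrow> tq \<Rightarrow> tq" is "\<lambda>a b. Plus a (Neg b)" by (intro derivable.cong_Plus derivable.cong_Neg)

lemma q_a1: "(a::tq) + b + c = a + (b + c)"
  by transfer (use axE[of "Plus (Plus x y) z" "Plus x (Plus y z)"] in \<open>simp add: Md_def\<close>)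
lemma q_a2: "(a::tq) + b = b + a"
  by transfer (use axE[of "Plus x y" "Plus y x"] in \<open>simp add: Md_def\<close>)
lemma q_a3: "(a::tq) + 0 = a"
  by transfer (use axE[of "Plus x Zero" "x"] in \<open>simp add: Md_def\<close>)
lemma q_a4: "(a::tq) + - a = 0"
  by transfer (use axE[of "Plus x (Neg x)" "Zero"] in \<open>simp add: Md_def\<close>)
lemma q_m1: "(a::tq) * b * c = a * (b * c)"
  by transfer (use axE[of "Times (Times x y) z" "Times x (Times y z)"] in \<open>simp add: Md_def\<close>)
lemma q_m2: "(a::tq) * b = b * a"
  by transfer (use axE[of "Times x y" "Times y x"] in \<open>simp add: Md_def\<close>)
lemma q_m3: "1 * (a::tq) = a"
  by transfer (use axE[of "Times One x" "x"] in \<open>simp add: Md_def\<close>)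
lemma q_d: "(a::tq) * (b + c) = a * b + a * c"
  by transfer (use axE[of "Times x (Plus y z)" "Plus (Times x y) (Times x z)"] in \<open>simp add: Md_def\<close>)
lemma q_diff: "(a::tq) - b = a + - b"
  by transfer (rule derivable.refl)
lemma q_01: "(0::tq) \<noteq> 1"
  by transfer (rule not01)

instance proof
  fix a b c :: tq
  show "a + b + c = a + (b + c)" by (rule q_a1)
  show "a + b = b + a" by (rule q_a2)
  show "0 + a = a" using q_a2 q_a3 by metis
  show "- a + a = 0" using q_a2 q_a4 by metis
  show "a - b = a + - b" by (rule q_diff)
  show "a * b * c = a * (b * c)" by (rule q_m1)
  show "a * b = b * a" by (rule q_m2)
  show "1 * a = a" by (rule q_m3)
  show "(a + b) * c = a * c + b * c" using q_d q_m2 by metis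
  show "(0::tq) \<noteq> 1" by (rule q_01)
qed
end

lift_definition qinv :: "tq \<Rightarrow> tq" is Inv by (rule derivable.cong_Inv)
lift_definition qsgn :: "tq \<Rightarrow> tq" is Sgn by (rule derivable.cong_Sgn)

lemma q_i1: "qinv (qinv a) = a"
  by transfer (use axE[of "Inv (Inv x)" "x"] in \<open>simp add: Md_def\<close>)
lemma q_i2: "a * (a * qinv a) = a"
  by transfer (use axE[of "Times x (Times x (Inv x))" "x"] in \<open>simp add: Md_def\<close>)
lemma q_s2: "qsgn (1 + - (a * qinv a)) = 1 + - (a * qinv a)"
  by transfer (use axE[of "Sgn (zero_of x)" "zero_of x"] in \<open>simp add: Signs_def zero_of_def one_of_def\<close>)
lemma q_s5: "qsgn (a * b) = qsgn a * qsgn b"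
  by transfer (use axE[of "Sgn (Times x y)" "Times (Sgn x) (Sgn y)"] in \<open>simp add: Signs_def\<close>)


lemma q_i3: "qinv a * (qinv a * a) = qinv a"
  using q_i2[of "qinv a"] q_i1[of a] by simp

lemma q_uniq:
  assumes h1: "a*b*a = a" and h2: "b*a*b = b" and h3: "a*c*a = a" and h4: "c*a*c = (c::tq)"
  shows "b = c"
proof -
  have e1: "a*b = (a*c)*(a*b)"
  proof -
    have "a*b = (a*c*a)*b" using h3 by simp
    also have "\<dots> = (a*c)*(a*b)" by (simp add: ac_simps)
    finally show ?thesis .
  qed
  have e2: "a*c = (a*b)*(a*c)"
  proof -
    have "a*c = (a*b*a)*c" using h1 by simp
    also have "\<dots> = (a*b)*(a*c)" by (simp add: ac_simps)
    finally show ?thesis .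
  qed
  have ab: "a*b = a*c" using e1 e2 by (metis mult.commute)
  have "b = b*(a*b)" using h2 by (simp add: ac_simps)
  also have "\<dots> = b*(a*c)" using ab by simp
  also have "\<dots> = (a*b)*c" by (simp add: ac_simps)
  also have "\<dots> = (a*c)*c" using ab by simp
  also have "\<dots> = c" using h4 by (simp add: ac_simps)
  finally show ?thesis .
qed

lemma q_inv_mult: "qinv (a*b) = qinv a * qinv b"
proof (rule q_uniq[of "a*b"])
  show "a * b * qinv (a * b) * (a * b) = a * b" using q_i2[of "a*b"] by (simp add: ac_simps)
  show "qinv (a * b) * (a * b) * qinv (a * b) = qinv (a * b)" using q_i3[of "a*b"] by (simp add: ac_simps)
  have "a * b * (qinv a * qinv b) * (a * b) = (a * (a * qinv a)) * (b * (b * qinv b))" by (simp add: ac_simps)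
  then show "a * b * (qinv a * qinv b) * (a * b) = a * b" by (simp add: q_i2)
  have "qinv a * qinv b * (a * b) * (qinv a * qinv b) = (qinv a * (qinv a * a)) * (qinv b * (qinv b * b))" by (simp add: ac_simps)
  then show "qinv a * qinv b * (a * b) * (qinv a * qinv b) = qinv a * qinv b" by (simp add: q_i3)
qed

lemma q_idem: "e * e = e \<Longrightarrow> qinv e = e"
  by (rule q_uniq[of e]) (use q_i2[of e] q_i3[of e] in \<open>simp_all add: ac_simps\<close>)

definition ideal :: "tq set \<Rightarrow> bool" where
  "ideal I \<longleftrightarrow> 0 \<in> I \<and> (\<forall>a\<in>I. \<forall>b\<in>I. a + b \<in> I) \<and> (\<forall>a\<in>I. \<forall>t. t * a \<in> I)"

lemma idealD: assumes "ideal I"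
  shows "0 \<in> I" "a \<in> I \<Longrightarrow> b \<in> I \<Longrightarrow> a + b \<in> I" "a \<in> I \<Longrightarrow> t * a \<in> I" "a \<in> I \<Longrightarrow> a * t \<in> I"
    "a \<in> I \<Longrightarrow> - a \<in> I" "a \<in> I \<Longrightarrow> b \<in> I \<Longrightarrow> a - b \<in> I"
proof -
  show "0 \<in> I" using assms by (simp add: ideal_def)
  show ab: "a \<in> I \<Longrightarrow> b \<in> I \<Longrightarrow> a + b \<in> I" for a b using assms by (simp add: ideal_def)
  show m: "a \<in> I \<Longrightarrow> t * a \<in> I" for a t using assms by (simp add: ideal_def)
  then show "a \<in> I \<Longrightarrow> a * t \<in> I" by (simp add: mult.commute)
  show n: "a \<in> I \<Longrightarrow> - a \<in> I" for a using m[of a "-1"] by simp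
  show "a \<in> I \<Longrightarrow> b \<in> I \<Longrightarrow> a - b \<in> I" using ab[of a "-b"] n[of b] by simp
qed

lemma cong_core:
  assumes I: "ideal I" and d: "a - b \<in> I"
  shows "qsgn a - qsgn b \<in> I" "qinv a - qinv b \<in> I"
proof -
  define dd where "dd = a - b"
  define e where "e = dd * qinv dd"
  define f where "f = 1 - e"
  have eI: "e \<in> I" unfolding e_def dd_def using idealD(4)[OF I d] .
  have fd: "f * dd = 0" unfolding f_def e_def using q_i2[of dd] by (simp add: algebra_simps)
  have fab: "f * a = f * b" using fd unfolding dd_def by (simp add: algebra_simps)
  have "e * e = (dd*(dd*qinv dd))*qinv dd" by (simp add: e_def ac_simps)
  then have ee: "e * e = e" by (simp add: q_i2 e_def)
  have ff: "f * f = f" unfolding f_def using ee by (simp add: algebra_simps)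
  have sf: "qsgn f = f" unfolding f_def e_def using q_s2[of dd] by simp
  have if': "qinv f = f" using q_idem[OF ff] .
  have ef: "e + f = 1" unfolding f_def by simp
  have "f * qsgn a = f * qsgn b" using fab q_s5[of f a] q_s5[of f b] sf by simp
  then have z: "(qsgn a - qsgn b) * f = 0" by (simp add: algebra_simps)
  have "qsgn a - qsgn b = (qsgn a - qsgn b) * (e + f)" using ef by simp
  also have "\<dots> = (qsgn a - qsgn b) * e" using z by (simp add: distrib_left)
  finally have "qsgn a - qsgn b = (qsgn a - qsgn b) * e" .
  then show "qsgn a - qsgn b \<in> I" using idealD(3)[OF I eI] by metis
  have "f * qinv a = f * qinv b" using fab q_inv_mult[of f a] q_inv_mult[of f b] if' by simp
  then have z: "(qinv a - qinv b) * f = 0" by (simp add: algebra_simps)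
  have "qinv a - qinv b = (qinv a - qinv b) * (e + f)" using ef by simp
  also have "\<dots> = (qinv a - qinv b) * e" using z by (simp add: distrib_left)
  finally have "qinv a - qinv b = (qinv a - qinv b) * e" .
  then show "qinv a - qinv b \<in> I" using idealD(3)[OF I eI] by metis
qed


definition eqv :: "tq set \<Rightarrow> tq \<Rightarrow> tq \<Rightarrow> bool" where "eqv I a b \<longleftrightarrow> a - b \<in> I"

lemma eqv_refl: "ideal I \<Longrightarrow> eqv I a a" by (simp add: eqv_def idealD)
lemma eqv_sym: "ideal I \<Longrightarrow> eqv I a b \<Longrightarrow> eqv I b a"
  unfolding eqv_def using idealD(5) by fastforce
lemma eqv_trans: "ideal I \<Longrightarrow> eqv I a b \<Longrightarrow> eqv I b c \<Longrightarrow> eqv I a c"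
  unfolding eqv_def using idealD(2)[of I "a - b" "b - c"] by simp
lemma eqv_plus: "ideal I \<Longrightarrow> eqv I a a' \<Longrightarrow> eqv I b b' \<Longrightarrow> eqv I (a + b) (a' + b')"
  unfolding eqv_def using idealD(2)[of I "a - a'" "b - b'"] by (simp add: algebra_simps)
lemma eqv_times: "ideal I \<Longrightarrow> eqv I a a' \<Longrightarrow> eqv I b b' \<Longrightarrow> eqv I (a * b) (a' * b')"
  unfolding eqv_def using idealD(2)[of I "b * (a - a')" "a' * (b - b')"] idealD(3)[of I "a - a'" b] idealD(3)[of I "b - b'" a']
  by (simp add: algebra_simps)
lemma eqv_neg: "ideal I \<Longrightarrow> eqv I a a' \<Longrightarrow> eqv I (- a) (- a')"
  unfolding eqv_def using idealD(5)[of I "a - a'"] by (simp add: algebra_simps)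
lemma eqv_inv: "ideal I \<Longrightarrow> eqv I a a' \<Longrightarrow> eqv I (qinv a) (qinv a')"
  unfolding eqv_def using cong_core by blast
lemma eqv_sgn: "ideal I \<Longrightarrow> eqv I a a' \<Longrightarrow> eqv I (qsgn a) (qsgn a')"
  unfolding eqv_def using cong_core by blast

definition canon :: "tq set \<Rightarrow> tq \<Rightarrow> nat" where
  "canon I a = to_nat (SOME t::tm. eqv I (abs_tq t) a)"
definition dec :: "nat \<Rightarrow> tq" where "dec n = abs_tq (from_nat n)"

lemma abs_rep: "abs_tq (rep_tq a) = a"
  by (rule Quotient3_abs_rep[OF Quotient3_tq])

lemma some_eqv: "ideal I \<Longrightarrow> eqv I (abs_tq (SOME t::tm. eqv I (abs_tq t) a)) a"
  by (rule someI[of _ "rep_tq a"]) (simp add: abs_rep eqv_refl)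

lemma dec_canon: "ideal I \<Longrightarrow> eqv I (dec (canon I a)) a"
  unfolding dec_def canon_def using some_eqv by simp

lemma canon_eq: assumes I: "ideal I" shows "canon I a = canon I b \<longleftrightarrow> eqv I a b"
proof
  assume "canon I a = canon I b"
  then have "(SOME t::tm. eqv I (abs_tq t) a) = (SOME t::tm. eqv I (abs_tq t) b)"
    unfolding canon_def by simp
  then show "eqv I a b" using some_eqv[OF I, of a] some_eqv[OF I, of b]
    by (metis I eqv_sym eqv_trans)
next
  assume ab: "eqv I a b"
  have "(\<lambda>t. eqv I (abs_tq t) a) = (\<lambda>t. eqv I (abs_tq t) b)"
    using ab I eqv_sym eqv_trans by blast
  then show "canon I a = canon I b" unfolding canon_def by simp
qed

lemma canon_dec: "ideal I \<Longrightarrow> canon I (f (dec (canon I a))) = canon I (f a) \<longleftrightarrow> eqv I (f (dec (canon I a))) (f a)"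
  by (rule canon_eq)

primrec evq :: "(nat \<Rightarrow> tq) \<Rightarrow> tm \<Rightarrow> tq" where
  "evq w (Var n) = w n"
| "evq w Zero = 0"
| "evq w One = 1"
| "evq w (Plus a b) = evq w a + evq w b"
| "evq w (Times a b) = evq w a * evq w b"
| "evq w (Neg a) = - evq w a"
| "evq w (Inv a) = qinv (evq w a)"
| "evq w (Sgn a) = qsgn (evq w a)"

lemma evq_subst: "evq w t = abs_tq (subst (\<lambda>k. rep_tq (w k)) t)"
  by (induction t) (simp_all add: abs_rep zero_tq.abs_eq one_tq.abs_eq plus_tq.abs_eq times_tq.abs_eq
      uminus_tq.abs_eq qinv.abs_eq qsgn.abs_eq)

lemma evq_var: "evq (\<lambda>k. abs_tq (Var k)) t = abs_tq t"
  by (induction t) (simp_all add: zero_tq.abs_eq one_tq.abs_eq plus_tq.abs_eq times_tq.abs_eq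
      uminus_tq.abs_eq qinv.abs_eq qsgn.abs_eq)

lemma evq_eqv: "ideal I \<Longrightarrow> (\<forall>k. eqv I (w k) (w' k)) \<Longrightarrow> eqv I (evq w t) (evq w' t)"
  by (induction t) (simp_all add: eqv_refl eqv_plus eqv_times eqv_neg eqv_inv eqv_sgn)

lemma evq_ax: "(l, r) \<in> EE \<Longrightarrow> evq w l = evq w r"
  unfolding evq_subst tq.abs_eq_iff by (rule derivable.ax)

definition QM :: "tq set \<Rightarrow> nat ms_struct" where
  "QM I = \<lparr>carrier = range (canon I), zero = canon I 0, one = canon I 1,
     add = \<lambda>n m. canon I (dec n + dec m), mul = \<lambda>n m. canon I (dec n * dec m),
     neg = \<lambda>n. canon I (- dec n), inv = \<lambda>n. canon I (qinv (dec n)), sgn = \<lambda>n. canon I (qsgn (dec n))\<rparr>"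

lemma eval_QM: assumes I: "ideal I" and v: "\<forall>n. v n \<in> range (canon I)"
  shows "eval (QM I) v t = canon I (evq (\<lambda>k. dec (v k)) t)"
proof (induction t)
  case (Var n)
  from v obtain a where "v n = canon I a" by auto
  then show ?case using eqv_sym[OF I dec_canon[OF I, of a]] canon_eq[OF I] by (simp add: QM_def)
next
  case (Plus t1 t2)
  then show ?case using canon_eq[OF I] dec_canon[OF I] eqv_plus[OF I] by (simp add: QM_def)
next
  case (Times t1 t2)
  then show ?case using canon_eq[OF I] dec_canon[OF I] eqv_times[OF I] by (simp add: QM_def)
next
  case (Neg t)
  then show ?case using canon_eq[OF I] dec_canon[OF I] eqv_neg[OF I] by (simp add: QM_def)
next
  case (Inv t)
  then show ?case using canon_eq[OF I] dec_canon[OF I] eqv_inv[OF I] by (simp add: QM_def)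
next
  case (Sgn t)
  then show ?case using canon_eq[OF I] dec_canon[OF I] eqv_sgn[OF I] by (simp add: QM_def)
qed (simp_all add: QM_def)


lemma max_ideal:
  assumes c: "c \<noteq> 0"
  shows "\<exists>I. ideal I \<and> c \<notin> I \<and> (\<forall>J. ideal J \<and> c \<notin> J \<and> I \<subseteq> J \<longrightarrow> J = I)"
proof -
  let ?S = "{J. ideal J \<and> c \<notin> J}"
  have "{0} \<in> ?S" using c by (simp add: ideal_def)
  then have ne: "?S \<noteq> {}" by blast
  have "\<exists>M\<in>?S. \<forall>X\<in>?S. M \<subseteq> X \<longrightarrow> X = M"
  proof (rule subset_Zorn_nonempty[OF ne])
    fix C assume Cne: "C \<noteq> {}" and ch: "subset.chain ?S C"
    then have CS: "C \<subseteq> ?S" and tot: "\<forall>X\<in>C. \<forall>Y\<in>C. X \<subseteq> Y \<or> Y \<subseteq> X"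
      by (auto simp: subset_chain_def)
    have "ideal (\<Union>C)"
      unfolding ideal_def
    proof (intro conjI ballI allI)
      show "0 \<in> \<Union>C" using Cne CS idealD(1) by blast
    next
      fix a b assume "a \<in> \<Union>C" "b \<in> \<Union>C"
      then obtain A B where AB: "A \<in> C" "B \<in> C" "a \<in> A" "b \<in> B" by blast
      show "a + b \<in> \<Union>C"
      proof (cases "A \<subseteq> B")
        case True then show ?thesis using AB CS idealD(2)[of B a b] by blast
      next
        case False then have "B \<subseteq> A" using tot AB by blast
        then show ?thesis using AB CS idealD(2)[of A a b] by blast
      qed
    next
      fix a t assume "a \<in> \<Union>C"
      then show "t * a \<in> \<Union>C" using CS idealD(3) by blast
    qed
    moreover have "c \<notin> \<Union>C" using CS by blast
    ultimately show "\<Union>C \<in> ?S" by simp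
  qed
  then show ?thesis by blast
qed

lemma max_IL:
  assumes I: "ideal I" and cI: "c \<notin> I" and mx: "\<forall>J. ideal J \<and> c \<notin> J \<and> I \<subseteq> J \<longrightarrow> J = I"
    and xI: "a \<notin> I"
  shows "1 - a * qinv a \<in> I"
proof (rule ccontr)
  assume nf: "1 - a * qinv a \<notin> I"
  define e where "e = a * qinv a"
  have ee: "e * (1 - e) = 0"
  proof -
    have "e * e = (a*(a*qinv a))*qinv a" by (simp add: e_def ac_simps)
    then have "e * e = e" by (simp add: q_i2 e_def)
    then show ?thesis by (simp add: algebra_simps)
  qed
  have eI: "e \<notin> I"
  proof
    assume "e \<in> I"
    then have "a * e \<in> I" using idealD(3)[OF I] by blast
    then show False using xI q_i2[of a] by (simp add: e_def)
  qed
  have gen: "\<exists>i\<in>I. \<exists>t. c = i + t * g" if gI: "g \<notin> I" for g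
  proof (rule ccontr)
    assume nc: "\<not> (\<exists>i\<in>I. \<exists>t. c = i + t * g)"
    define J where "J = {i + t * g | i t. i \<in> I}"
    have "ideal J" unfolding ideal_def J_def
    proof (intro conjI ballI allI)
      show "0 \<in> {i + t * g |i t. i \<in> I}" using idealD(1)[OF I] by (intro CollectI exI[of _ 0]) auto
    next
      fix p q assume "p \<in> {i + t * g |i t. i \<in> I}" "q \<in> {i + t * g |i t. i \<in> I}"
      then obtain i t j u where "p = i + t * g" "q = j + u * g" "i \<in> I" "j \<in> I" by blast
      then show "p + q \<in> {i + t * g |i t. i \<in> I}"
        using idealD(2)[OF I, of i j] by (intro CollectI exI[of _ "i + j"] exI[of _ "t + u"]) (auto simp: algebra_simps)
    next
      fix p s assume "p \<in> {i + t * g |i t. i \<in> I}"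
      then obtain i t where "p = i + t * g" "i \<in> I" by blast
      then show "s * p \<in> {i + t * g |i t. i \<in> I}"
        using idealD(3)[OF I, of i s] by (intro CollectI exI[of _ "s * i"] exI[of _ "s * t"]) (auto simp: algebra_simps)
    qed
    moreover have "c \<notin> J" using nc unfolding J_def by blast
    moreover have "I \<subseteq> J" unfolding J_def by (force intro: exI[of _ 0])
    ultimately have "J = I" using mx by blast
    moreover have "g \<in> J" unfolding J_def using idealD(1)[OF I] by (force intro: exI[of _ 1])
    ultimately show False using gI by blast
  qed
  obtain i t where i: "i \<in> I" and c1: "c = i + t * e" using gen[OF eI] by blast
  have nf': "1 - e \<notin> I" using nf by (simp add: e_def)
  obtain j u where j: "j \<in> I" and c2: "c = j + u * (1 - e)" using gen[OF nf'] by blast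
  have p: "(i + t*e) * (j + u*(1-e)) = i*(j + u*(1-e)) + (t*e)*j + (t*u)*(e*(1-e))"
    by (simp add: algebra_simps)
  have "i*(j + u*(1-e)) + (t*e)*j \<in> I"
    using idealD(2)[OF I idealD(4)[OF I i] idealD(3)[OF I j]] .
  then have "(i + t*e) * (j + u*(1-e)) \<in> I" using p ee by simp
  moreover have "c * c = (i + t*e)*(j + u*(1-e))" by (simp only: c1[symmetric] c2[symmetric])
  ultimately have cc: "c * c \<in> I" by simp
  have "c = (c * c) * qinv c" using q_i2[of c] by (simp add: ac_simps)
  then have "c \<in> I" using idealD(4)[OF I cc] by metis
  then show False using cI by blast
qed


lemma QM_model:
  assumes I: "ideal I" and cI: "c \<notin> I" and mx: "\<forall>J. ideal J \<and> c \<notin> J \<and> I \<subseteq> J \<longrightarrow> J = I"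
  shows "is_model (QM I)"
proof -
  have st: "is_struct (QM I)" by (simp add: QM_def is_struct_def)
  have hl: "holds (QM I) l r" if lr: "(l, r) \<in> EE" for l r
    unfolding holds_def
  proof (intro allI impI)
    fix v :: "nat \<Rightarrow> nat" assume v: "\<forall>n. v n \<in> carrier (QM I)"
    then have v': "\<forall>n. v n \<in> range (canon I)" by (simp add: QM_def)
    show "eval (QM I) v l = eval (QM I) v r"
      unfolding eval_QM[OF I v'] using evq_ax[OF lr] by simp
  qed
  have sat: "satisfies_eqs (QM I) EE" using hl by (auto simp: satisfies_eqs_def)
  have il: "satisfies_IL (QM I)"
    unfolding satisfies_IL_def
  proof (intro ballI impI)
    fix n assume n: "n \<in> carrier (QM I)" and nz: "n \<noteq> zero (QM I)"
    then obtain A where nA: "n = canon I A" by (auto simp: QM_def)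
    have "\<not> eqv I A 0" using nz nA canon_eq[OF I] by (simp add: QM_def)
    then have AI: "A \<notin> I" by (simp add: eqv_def)
    have d1: "eqv I (dec n) A" using dec_canon[OF I] nA by simp
    have d2: "eqv I (dec (canon I (qinv (dec n)))) (qinv A)"
      using eqv_trans[OF I dec_canon[OF I] eqv_inv[OF I d1]] .
    have d3: "eqv I (A * qinv A) 1"
      using idealD(5)[OF I max_IL[OF I cI mx AI]] by (simp add: eqv_def)
    have "eqv I (dec n * dec (canon I (qinv (dec n)))) 1"
      using eqv_trans[OF I eqv_times[OF I d1 d2] d3] .
    then show "mul (QM I) n (inv (QM I) n) = one (QM I)"
      using canon_eq[OF I] by (simp add: QM_def)
  qed
  show ?thesis using st sat il by (simp add: is_model_def)
qed

theorem corollary2: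
  fixes r s :: tm
  shows "(derivable (Md \<union> Signs) r s \<longrightarrow>
            (\<forall>M :: 'a ms_struct. is_model M \<longrightarrow> holds M r s))
       \<and> ((\<forall>M :: nat ms_struct. is_model M \<longrightarrow> holds M r s) \<longrightarrow>
            derivable (Md \<union> Signs) r s)"
proof (intro conjI impI allI)
  fix M :: "'a ms_struct"
  assume "derivable (Md \<union> Signs) r s" "is_model M"
  then show "holds M r s" using sound by (auto simp: is_model_def)
next
  assume H: "\<forall>M :: nat ms_struct. is_model M \<longrightarrow> holds M r s"
  show "derivable (Md \<union> Signs) r s"
  proof (rule ccontr)
    assume nd: "\<not> derivable (Md \<union> Signs) r s"
    define c where "c = abs_tq r - abs_tq s"
    have "c \<noteq> 0" using nd tq.abs_eq_iff[of r s] by (simp add: c_def)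
    then obtain I where I: "ideal I" and cI: "c \<notin> I"
      and mx: "\<forall>J. ideal J \<and> c \<notin> J \<and> I \<subseteq> J \<longrightarrow> J = I"
      using max_ideal by blast
    have hm: "holds (QM I) r s" using H QM_model[OF I cI mx] by blast
    define v where "v k = canon I (abs_tq (Var k))" for k
    have v': "\<forall>n. v n \<in> range (canon I)" by (simp add: v_def)
    then have vc: "\<forall>n. v n \<in> carrier (QM I)" by (simp add: QM_def)
    have w: "\<forall>k. eqv I (dec (v k)) (abs_tq (Var k))" using dec_canon[OF I] by (simp add: v_def)
    have ev: "eval (QM I) v t = canon I (abs_tq t)" for t
      unfolding eval_QM[OF I v'] canon_eq[OF I]
      using evq_eqv[OF I w, of t] evq_var[of t] by simp
    have "eval (QM I) v r = eval (QM I) v s" using hm vc unfolding holds_def by blast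
    then have "canon I (abs_tq r) = canon I (abs_tq s)" using ev by simp
    then have "c \<in> I" using canon_eq[OF I] by (simp add: eqv_def c_def)
    then show False using cI by blast
  qed
qed

end
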